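(* Let $\mathcal{X}=\{x\in\mathbb{R}^d:\|x\|_2\le B\}$, $\mathcal{Y}=\{1,\dots,k\}$, $\mathcal{Z}=\mathcal{X}\times\mathcal{Y}$ with metric $d_\mathcal{Z}((x,y),(x',y'))=\|x-x'\|_2+\mathbb{1}_{(y\ne y')}$. Let $\sigma_1,\dots,\sigma_L$ be coordinatewise activations with $\sigma_i$ $\rho_i$-Lipschitz and $\sigma_i(0)=0$, and for $\mathcal{A}=(A_1,\dots,A_L)$, $A_i\in\mathbb{R}^{d_i\times d_{i-1}}$, $d_0=d$, $d_L=k$, let $\mathcal{H}_\mathcal{A}(x)=\sigma_L(A_L\sigma_{L-1}(\cdots\sigma_1(A_1x)\cdots))$. Let $\mathcal{M}(v,y)=v_y-\max_{j\ne y}v_j$ and, for $\gamma>0$, $l_\gamma(r)=0$ if $r<-\gamma$, $1+r/\gamma$ if $r\in[-\gamma,0]$, $1$ if $r>0$. Let $\mathcal{F}=\{(x,y)\mapsto l_\gamma(-\mathcal{M}(\mathcal{H}_\mathcal{A}(x),y)):\|A_i\|_\sigma\le s_i,\|A_i\|_F\le b_i\}$. Let $P_n$ be the empirical distribution of points $(x_1,y_1),\dots,(x_n,y_n)\in\mathcal{Z}$. Then for any $f\in\mathcal{F}$ (with weights $\mathcal{A}$), $\lambda^+_{f,P_n}\le C_4$, where $$C_4:=\max_j\Big\{\frac2\gamma\prod_{i=1}^L\rho_i\|A_i\|_\sigma,\ \frac1\gamma\big(\mathcal{M}(\mathcal{H}_\mathcal{A}(x_j),y_j)+\max\mathcal{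H}_\mathcal{A}(x_j)-\min\mathcal{H}_\mathcal{A}(x_j)\big)\Big\}.$$
   Context: $\max v$ and $\min v$ denote the largest and smallest coordinates of a vector $v$; $\|\cdot\|_\sigma$ and $\|\cdot\|_F$ are the spectral and Frobenius norms. $\psi_{f,P_n}(\lambda):=\mathbb{E}_{z\sim P_n}\big(\sup_{z'\in\mathcal{Z}}\{f(z')-\lambda d_\mathcal{Z}(z,z')-f(z)\}\big)$ and $\lambda^+_{f,P_n}:=\inf\{\lambda:\psi_{f,P_n}(\lambda)=0\}$. *)

theory Defs
  imports Complex_Main "Jordan_Normal_Form.Matrix"
begin

definition vnorm :: "real vec \<Rightarrow> real" where
  "vnorm v = sqrt (\<Sum>i<dim_vec v. (v $ i)^2)"

definition spec_norm :: "real mat \<Rightarrow> real" where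
  "spec_norm A = Sup {vnorm (A *\<^sub>v w) | w. w \<in> carrier_vec (dim_col A) \<and> vnorm w \<le> 1}"

definition frob_norm :: "real mat \<Rightarrow> real" where
  "frob_norm A = sqrt (\<Sum>i<dim_row A. \<Sum>j<dim_col A. (A $$ (i, j))^2)"

definition vmax :: "real vec \<Rightarrow> real" where
  "vmax v = Max {v $ i | i. i < dim_vec v}"
definition vmin :: "real vec \<Rightarrow> real" where
  "vmin v = Min {v $ i | i. i < dim_vec v}"

text \<open>Margin M(v,y) = v_y - max_{j /= y} v_j, labels y in {1..k}, coordinate y stored at index y-1.\<close>
definition margin :: "real vec \<Rightarrow> nat \<Rightarrow> real" where
  "margin v y = v $ (y - 1) - Max {v $ (j - 1) | j. j \<in> {1..dim_vec v} \<and> j \<noteq> y}"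

definition ramp :: "real \<Rightarrow> real \<Rightarrow> real" where
  "ramp \<gamma> r = (if r < - \<gamma> then 0 else if r \<le> 0 then 1 + r / \<gamma> else 1)"

fun net :: "(nat \<Rightarrow> real \<Rightarrow> real) \<Rightarrow> (nat \<Rightarrow> real mat) \<Rightarrow> nat \<Rightarrow> real vec \<Rightarrow> real vec" where
  "net \<sigma> A 0 x = x"
| "net \<sigma> A (Suc i) x = map_vec (\<sigma> (Suc i)) (A (Suc i) *\<^sub>v net \<sigma> A i x)"

definition Zset :: "nat \<Rightarrow> nat \<Rightarrow> real \<Rightarrow> (real vec \<times> nat) set" where
  "Zset d k B = {(x, y). x \<in> carrier_vec d \<and> vnorm x \<le> B \<and> y \<in> {1..k}}"

definition dZ :: "real vec \<times> nat \<Rightarrow> real vec \<times> nat \<Rightarrow> real" where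
  "dZ z z' = vnorm (fst z - fst z') + (if snd z \<noteq> snd z' then 1 else 0)"

text \<open>psi_{f,P_n}(lambda) for the empirical distribution of zs 0, ..., zs (n-1).\<close>
definition psi :: "('z set) \<Rightarrow> ('z \<Rightarrow> 'z \<Rightarrow> real) \<Rightarrow> ('z \<Rightarrow> real) \<Rightarrow> (nat \<Rightarrow> 'z) \<Rightarrow> nat \<Rightarrow> real \<Rightarrow> real" where
  "psi Z dst f zs n lam =
     (\<Sum>j<n. Sup {f z' - lam * dst (zs j) z' - f (zs j) | z'. z' \<in> Z}) / real n"

definition lambda_plus :: "('z set) \<Rightarrow> ('z \<Rightarrow> 'z \<Rightarrow> real) \<Rightarrow> ('z \<Rightarrow> real) \<Rightarrow> (nat \<Rightarrow> 'z) \<Rightarrow> nat \<Rightarrow> real" where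
  "lambda_plus Z dst f zs n = Inf {lam. psi Z dst f zs n lam = 0}"

end

theory Submission
  imports Defs "HOL-Analysis.L2_Norm"
begin


lemma vnorm_L2: "vnorm v = L2_set (\<lambda>i. v $ i) {..<dim_vec v}"
  by (simp add: vnorm_def L2_set_def)

lemma vnorm_nonneg: "vnorm v \<ge> 0"
  by (simp add: vnorm_def sum_nonneg)

lemma vnorm_zero: "vnorm (0\<^sub>v m) = 0"
  by (simp add: vnorm_def)

lemma vnorm_sub_self: "vnorm (v - v) = 0"
  by (simp add: vnorm_def)

lemma vnorm_coord: "i < dim_vec v \<Longrightarrow> \<bar>v $ i\<bar> \<le> vnorm v"
  unfolding vnorm_L2
  using member_le_L2_set[of "{..<dim_vec v}" i "\<lambda>i. \<bar>v $ i\<bar>"]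
  by (simp add: L2_set_def)

lemma vnorm_add_le:
  assumes "dim_vec a = dim_vec b"
  shows "vnorm (a + b) \<le> vnorm a + vnorm b"
proof -
  have "vnorm (a + b) = L2_set (\<lambda>i. a $ i + b $ i) {..<dim_vec b}"
    unfolding vnorm_L2 by (intro L2_set_cong) (auto simp: assms)
  also have "\<dots> \<le> vnorm a + vnorm b"
    using L2_set_triangle_ineq assms by (simp add: vnorm_L2)
  finally show ?thesis .
qed

lemma vnorm_tri:
  assumes "dim_vec a = m" "dim_vec b = m" "dim_vec c = m"
  shows "vnorm (a - c) \<le> vnorm (a - b) + vnorm (b - c)"
proof -
  have "a - c = (a - b) + (b - c)" using assms by (intro eq_vecI) auto
  then show ?thesis using vnorm_add_le[of "a - b" "b - c"] assms by simp
qed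

lemma vnorm_minus_comm:
  assumes "dim_vec a = dim_vec b"
  shows "vnorm (a - b) = vnorm (b - a)"
proof -
  have "(\<Sum>i<dim_vec b. ((a - b) $ i)\<^sup>2) = (\<Sum>i<dim_vec a. ((b - a) $ i)\<^sup>2)"
    using assms by (intro sum.cong) (auto simp: power2_commute)
  then show ?thesis using assms by (simp add: vnorm_def)
qed

lemma vnorm_diff_le:
  assumes "dim_vec a = dim_vec b"
  shows "vnorm (a - b) \<le> vnorm a + vnorm b"
proof -
  have "vnorm (a - b) = L2_set (\<lambda>i. a $ i + (- b $ i)) {..<dim_vec b}"
    unfolding vnorm_L2 by (intro L2_set_cong) (auto simp: assms)
  also have "\<dots> \<le> vnorm a + L2_set (\<lambda>i. - b $ i) {..<dim_vec b}"
    using L2_set_triangle_ineq[of "\<lambda>i. a $ i" "\<lambda>i. - b $ i" "{..<dim_vec b}"] assms by (simp add: vnorm_L2)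
  also have "L2_set (\<lambda>i. - b $ i) {..<dim_vec b} = vnorm b"
    by (simp add: vnorm_L2 L2_set_def)
  finally show ?thesis .
qed

lemma vnorm_smult: "vnorm (c \<cdot>\<^sub>v v) = \<bar>c\<bar> * vnorm v"
proof -
  have "(\<Sum>i<dim_vec v. ((c \<cdot>\<^sub>v v) $ i)\<^sup>2) = c\<^sup>2 * (\<Sum>i<dim_vec v. (v $ i)\<^sup>2)"
    by (simp add: sum_distrib_left power_mult_distrib)
  then show ?thesis by (simp add: vnorm_def real_sqrt_mult)
qed

lemma mat_vec_frob:
  assumes "dim_vec w = dim_col A"
  shows "vnorm (A *\<^sub>v w) \<le> frob_norm A * vnorm w"
proof -
  have row: "((A *\<^sub>v w) $ i)\<^sup>2 \<le> (\<Sum>j<dim_col A. (A $$ (i, j))\<^sup>2) * (vnorm w)\<^sup>2"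
    if i: "i < dim_row A" for i
  proof -
    have "\<bar>(A *\<^sub>v w) $ i\<bar> = \<bar>\<Sum>j<dim_col A. A $$ (i,j) * w $ j\<bar>"
      using i assms by (simp add: scalar_prod_def atLeast0LessThan)
    also have "\<dots> \<le> (\<Sum>j<dim_col A. \<bar>A $$ (i,j)\<bar> * \<bar>w $ j\<bar>)"
      by (rule order_trans[OF sum_abs]) (simp add: abs_mult)
    also have "\<dots> \<le> L2_set (\<lambda>j. A $$ (i,j)) {..<dim_col A} * vnorm w"
      using L2_set_mult_ineq[of "\<lambda>j. A $$ (i,j)" "\<lambda>j. w $ j"] assms by (simp add: vnorm_L2)
    finally have "\<bar>(A *\<^sub>v w) $ i\<bar> \<le> L2_set (\<lambda>j. A $$ (i,j)) {..<dim_col A} * vnorm w" .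
    then have "\<bar>(A *\<^sub>v w) $ i\<bar>\<^sup>2 \<le> (L2_set (\<lambda>j. A $$ (i,j)) {..<dim_col A} * vnorm w)\<^sup>2"
      by (intro power_mono) auto
    then show ?thesis
      by (simp add: power_mult_distrib L2_set_def sum_nonneg)
  qed
  have "(\<Sum>i<dim_row A. ((A *\<^sub>v w) $ i)\<^sup>2) \<le> (\<Sum>i<dim_row A. (\<Sum>j<dim_col A. (A $$ (i, j))\<^sup>2) * (vnorm w)\<^sup>2)"
    by (intro sum_mono row) auto
  also have "\<dots> = (frob_norm A * vnorm w)\<^sup>2"
    by (simp add: frob_norm_def power_mult_distrib sum_distrib_right sum_nonneg)
  finally have "sqrt (\<Sum>i<dim_row A. ((A *\<^sub>v w) $ i)\<^sup>2) \<le> sqrt ((frob_norm A * vnorm w)\<^sup>2)"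
    by (rule real_sqrt_le_mono)
  also have "\<dots> = frob_norm A * vnorm w"
    by (simp add: frob_norm_def vnorm_nonneg sum_nonneg)
  finally show ?thesis by (simp add: vnorm_def)
qed



lemma spec_bdd: "bdd_above {vnorm (A *\<^sub>v w) | w. w \<in> carrier_vec (dim_col A) \<and> vnorm w \<le> 1}"
proof (rule bdd_aboveI[where M = "frob_norm A"])
  fix x assume "x \<in> {vnorm (A *\<^sub>v w) | w. w \<in> carrier_vec (dim_col A) \<and> vnorm w \<le> 1}"
  then obtain w where w: "w \<in> carrier_vec (dim_col A)" "vnorm w \<le> 1" and x: "x = vnorm (A *\<^sub>v w)" by auto
  have "x \<le> frob_norm A * vnorm w" using mat_vec_frob[of w A] w x by auto
  also have "\<dots> \<le> frob_norm A" using w by (intro mult_left_le) (auto simp: frob_norm_def vnorm_nonneg sum_nonneg)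
  finally show "x \<le> frob_norm A" .
qed

lemma spec_mem: "w \<in> carrier_vec (dim_col A) \<Longrightarrow> vnorm w \<le> 1 \<Longrightarrow> vnorm (A *\<^sub>v w) \<le> spec_norm A"
  unfolding spec_norm_def by (rule cSup_upper[OF _ spec_bdd]) auto

lemma spec_nonneg: "spec_norm A \<ge> 0"
proof -
  have "vnorm (A *\<^sub>v 0\<^sub>v (dim_col A)) \<le> spec_norm A"
    by (rule spec_mem) (auto simp: vnorm_zero)
  moreover have "A *\<^sub>v 0\<^sub>v (dim_col A) = 0\<^sub>v (dim_row A)"
    by (intro eq_vecI) (auto simp: scalar_prod_def)
  ultimately show ?thesis by (simp add: vnorm_zero)
qed

lemma spec_bound:
  assumes w: "w \<in> carrier_vec (dim_col A)"
  shows "vnorm (A *\<^sub>v w) \<le> spec_norm A * vnorm w"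
proof (cases "vnorm w = 0")
  case True
  have "w = 0\<^sub>v (dim_col A)"
  proof (intro eq_vecI)
    fix i assume "i < dim_vec (0\<^sub>v (dim_col A))"
    then have "\<bar>w $ i\<bar> \<le> 0" using vnorm_coord[of i w] w True by auto
    then show "w $ i = 0\<^sub>v (dim_col A) $ i" using \<open>i < _\<close> by auto
  qed (use w in auto)
  moreover have "A *\<^sub>v 0\<^sub>v (dim_col A) = 0\<^sub>v (dim_row A)"
    by (intro eq_vecI) (auto simp: scalar_prod_def)
  ultimately show ?thesis by (simp add: vnorm_zero)
next
  case False
  then have pos: "vnorm w > 0" using vnorm_nonneg[of w] by auto
  let ?u = "(1 / vnorm w) \<cdot>\<^sub>v w"
  have "vnorm ?u = 1" using pos by (simp add: vnorm_smult)
  then have "vnorm (A *\<^sub>v ?u) \<le> spec_norm A" using w by (intro spec_mem) auto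
  moreover have "A *\<^sub>v ?u = (1 / vnorm w) \<cdot>\<^sub>v (A *\<^sub>v w)"
    using w by (intro mult_mat_vec) auto
  ultimately have "vnorm (A *\<^sub>v w) / vnorm w \<le> spec_norm A"
    using pos by (simp add: vnorm_smult)
  then show ?thesis using pos by (simp add: divide_le_eq mult.commute)
qed

lemma map_vec_lip:
  assumes "dim_vec a = dim_vec b" and r: "\<forall>u v. \<bar>f u - f v\<bar> \<le> r * \<bar>u - v\<bar>"
  shows "vnorm (map_vec f a - map_vec f b) \<le> r * vnorm (a - b)"
proof -
  have r0: "r \<ge> 0"
  proof (rule ccontr)
    assume "\<not> r \<ge> 0"
    then have "\<bar>f 1 - f 0\<bar> \<le> r * \<bar>1 - 0\<bar>" using r by blast
    with \<open>\<not> r \<ge> 0\<close> show False by auto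
  qed
  have "vnorm (map_vec f a - map_vec f b) = L2_set (\<lambda>i. f (a $ i) - f (b $ i)) {..<dim_vec b}"
    unfolding vnorm_L2 by (intro L2_set_cong) (auto simp: assms)
  also have "\<dots> \<le> L2_set (\<lambda>i. r * \<bar>a $ i - b $ i\<bar>) {..<dim_vec b}"
    unfolding L2_set_def
  proof (intro real_sqrt_le_mono sum_mono)
    fix i
    have "\<bar>f (a $ i) - f (b $ i)\<bar> \<le> r * \<bar>a $ i - b $ i\<bar>" using r by blast
    then have "\<bar>f (a $ i) - f (b $ i)\<bar>\<^sup>2 \<le> (r * \<bar>a $ i - b $ i\<bar>)\<^sup>2"
      by (intro power_mono) auto
    then show "(f (a $ i) - f (b $ i))\<^sup>2 \<le> (r * \<bar>a $ i - b $ i\<bar>)\<^sup>2" by simp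
  qed
  also have "\<dots> = r * vnorm (a - b)"
  proof -
    have "(\<Sum>i<dim_vec b. (r * \<bar>a $ i - b $ i\<bar>)\<^sup>2) = r\<^sup>2 * (\<Sum>i<dim_vec b. ((a - b) $ i)\<^sup>2)"
      by (simp add: sum_distrib_left power_mult_distrib)
    then show ?thesis using r0 assms by (simp add: L2_set_def vnorm_def real_sqrt_mult)
  qed
  finally show ?thesis .
qed



lemma lip_nonneg: "\<forall>u v. \<bar>f u - f v\<bar> \<le> (r::real) * \<bar>u - v\<bar> \<Longrightarrow> r \<ge> 0"
proof (rule ccontr)
  assume a: "\<forall>u v. \<bar>f u - f v\<bar> \<le> r * \<bar>u - v\<bar>" "\<not> r \<ge> 0"
  have "\<bar>f 1 - f 0\<bar> \<le> r * \<bar>1 - 0\<bar>" by (rule a(1)[rule_format])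
  with a(2) show False by simp
qed

lemma net_dim:
  assumes Adim: "\<forall>i\<in>{1..L}. A i \<in> carrier_mat (dims i) (dims (i - 1))"
    and d0: "dims 0 = d" and x: "x \<in> carrier_vec d"
  shows "i \<le> L \<Longrightarrow> net \<sigma> A i x \<in> carrier_vec (dims i)"
proof (induction i)
  case 0 then show ?case using x d0 by simp
next
  case (Suc i)
  have "Suc i \<in> {1..L}" using Suc.prems by simp
  from Adim[rule_format, OF this] have "A (Suc i) \<in> carrier_mat (dims (Suc i)) (dims i)" by simp
  then have "dim_row (A (Suc i)) = dims (Suc i)" by (rule carrier_matD)
  then show ?case by (intro carrier_vecI) simp
qed

lemma net_lip:
  assumes Adim: "\<forall>i\<in>{1..L}. A i \<in> carrier_mat (dims i) (dims (i - 1))"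
    and d0: "dims 0 = d" and x: "x \<in> carrier_vec d" and x': "x' \<in> carrier_vec d"
    and lip: "\<forall>i\<in>{1..L}. \<forall>u v. \<bar>\<sigma> i u - \<sigma> i v\<bar> \<le> \<rho> i * \<bar>u - v\<bar>"
  shows "i \<le> L \<Longrightarrow> vnorm (net \<sigma> A i x - net \<sigma> A i x')
           \<le> (\<Prod>l=1..i. \<rho> l * spec_norm (A l)) * vnorm (x - x')"
proof (induction i)
  case 0 then show ?case by simp
next
  case (Suc i)
  have SiL: "Suc i \<in> {1..L}" using Suc.prems by simp
  from Adim[rule_format, OF this] have Ai: "A (Suc i) \<in> carrier_mat (dims (Suc i)) (dims i)" by simp
  have lipi: "\<forall>u v. \<bar>\<sigma> (Suc i) u - \<sigma> (Suc i) v\<bar> \<le> \<rho> (Suc i) * \<bar>u - v\<bar>"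
    using lip SiL by blast
  have r0: "\<rho> (Suc i) \<ge> 0" using lip_nonneg[OF lipi] .
  have vx: "net \<sigma> A i x \<in> carrier_vec (dims i)" and vx': "net \<sigma> A i x' \<in> carrier_vec (dims i)"
    using net_dim[OF Adim d0 x, of i] net_dim[OF Adim d0 x', of i] Suc.prems by simp_all
  let ?v = "net \<sigma> A i x" and ?v' = "net \<sigma> A i x'"
  let ?P = "\<Prod>l=1..i. \<rho> l * spec_norm (A l)"
  have s1: "vnorm (net \<sigma> A (Suc i) x - net \<sigma> A (Suc i) x')
        \<le> \<rho> (Suc i) * vnorm (A (Suc i) *\<^sub>v ?v - A (Suc i) *\<^sub>v ?v')"
  proof -
    have "dim_vec (A (Suc i) *\<^sub>v ?v) = dim_vec (A (Suc i) *\<^sub>v ?v')" by simp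
    from map_vec_lip[OF this lipi] show ?thesis by simp
  qed
  have s2: "A (Suc i) *\<^sub>v ?v - A (Suc i) *\<^sub>v ?v' = A (Suc i) *\<^sub>v (?v - ?v')"
    using mult_minus_distrib_mat_vec[OF Ai vx vx'] by simp
  have s3: "vnorm (A (Suc i) *\<^sub>v (?v - ?v')) \<le> spec_norm (A (Suc i)) * vnorm (?v - ?v')"
    using Ai vx vx' by (intro spec_bound) auto
  have s4: "vnorm (?v - ?v') \<le> ?P * vnorm (x - x')"
    by (rule Suc.IH) (use Suc.prems in simp)
  have s5: "spec_norm (A (Suc i)) * vnorm (?v - ?v') \<le> spec_norm (A (Suc i)) * (?P * vnorm (x - x'))"
    using s4 spec_nonneg[of "A (Suc i)"] by (rule mult_left_mono)
  have s6: "\<rho> (Suc i) * vnorm (A (Suc i) *\<^sub>v (?v - ?v')) \<le> \<rho> (Suc i) * (spec_norm (A (Suc i)) * (?P * vnorm (x - x')))"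
    using order_trans[OF s3 s5] r0 by (rule mult_left_mono)
  have "vnorm (net \<sigma> A (Suc i) x - net \<sigma> A (Suc i) x')
     \<le> \<rho> (Suc i) * (spec_norm (A (Suc i)) * (?P * vnorm (x - x')))"
    using s1 s6 unfolding s2 by linarith
  moreover have "(\<Prod>l=1..Suc i. \<rho> l * spec_norm (A l)) = (\<rho> (Suc i) * spec_norm (A (Suc i))) * ?P"
    by (rule prod.nat_ivl_Suc') simp
  ultimately show ?case by (simp only: mult.assoc)
qed

lemma max_shift:
  fixes g h :: "nat \<Rightarrow> real"
  assumes "finite J" "J \<noteq> {}" "\<forall>j\<in>J. g j \<le> h j + e"
  shows "Max (g ` J) \<le> Max (h ` J) + e"
proof -
  have "Max (g ` J) \<in> g ` J" using assms by (intro Max_in) auto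
  then obtain j0 where j0: "j0 \<in> J" "Max (g ` J) = g j0" by auto
  have "h j0 \<le> Max (h ` J)" using assms j0 by auto
  moreover have "g j0 \<le> h j0 + e" using assms j0 by auto
  ultimately show ?thesis using j0 by linarith
qed

lemma margin_alt: "margin v y = v $ (y - 1) - Max ((\<lambda>j. v $ (j - 1)) ` {j\<in>{1..dim_vec v}. j \<noteq> y})"
  unfolding margin_def by (rule arg_cong[where f = "\<lambda>S. v $ (y - 1) - Max S"]) auto

lemma margin_lip1:
  assumes "dim_vec v = k" "dim_vec v' = k" "k \<ge> 2" "y \<in> {1..k}"
  shows "margin v' y - margin v y \<le> 2 * vnorm (v' - v)"
proof -
  let ?J = "{j\<in>{1..k}. j \<noteq> y}"
  have fin: "finite ?J" by auto
  have ne: "?J \<noteq> {}"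
  proof (cases "y = 1")
    case True then have "2 \<in> ?J" using assms by auto
    then show ?thesis by blast
  next
    case False then have "1 \<in> ?J" using assms by auto
    then show ?thesis by blast
  qed
  have c: "\<bar>(v' - v) $ i\<bar> \<le> vnorm (v' - v)" if "i < k" for i
  proof -
    have "i < dim_vec (v' - v)" using that assms by simp
    then show ?thesis by (rule vnorm_coord)
  qed
  have "Max ((\<lambda>j. v $ (j - 1)) ` ?J) \<le> Max ((\<lambda>j. v' $ (j - 1)) ` ?J) + vnorm (v' - v)"
  proof (rule max_shift[OF fin ne], intro ballI)
    fix j assume "j \<in> ?J"
    then have "j - 1 < k" by auto
    then have "\<bar>(v' - v) $ (j - 1)\<bar> \<le> vnorm (v' - v)" by (rule c)
    then have "\<bar>v' $ (j - 1) - v $ (j - 1)\<bar> \<le> vnorm (v' - v)" using \<open>j - 1 < k\<close> assms by simp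
    then show "v $ (j - 1) \<le> v' $ (j - 1) + vnorm (v' - v)" by linarith
  qed
  moreover have "v' $ (y - 1) - v $ (y - 1) \<le> vnorm (v' - v)"
  proof -
    have yk: "y - 1 < k" using assms by auto
    then have "\<bar>(v' - v) $ (y - 1)\<bar> \<le> vnorm (v' - v)" by (rule c)
    then have "\<bar>v' $ (y - 1) - v $ (y - 1)\<bar> \<le> vnorm (v' - v)" using yk assms by simp
    then show ?thesis by linarith
  qed
  ultimately show ?thesis unfolding margin_alt assms(1,2) by linarith
qed

lemma margin_lip:
  assumes "dim_vec v = k" "dim_vec v' = k" "k \<ge> 2" "y \<in> {1..k}"
  shows "\<bar>margin v' y - margin v y\<bar> \<le> 2 * vnorm (v' - v)"
proof -
  have a: "margin v' y - margin v y \<le> 2 * vnorm (v' - v)" by (rule margin_lip1[OF assms])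
  have b: "margin v y - margin v' y \<le> 2 * vnorm (v - v')" by (rule margin_lip1[of v' k v y]) (use assms in auto)
  have c: "vnorm (v - v') = vnorm (v' - v)" by (rule vnorm_minus_comm) (use assms in auto)
  show ?thesis using a b unfolding c by linarith
qed

lemma margin_range:
  assumes "dim_vec v = k" "k \<ge> 2" "y \<in> {1..k}"
  shows "margin v y + vmax v - vmin v \<ge> 0" "margin v y + vmax v - vmin v \<ge> margin v y"
proof -
  let ?J = "{j\<in>{1..k}. j \<noteq> y}"
  have ne: "?J \<noteq> {}"
  proof (cases "y = 1")
    case True then have "2 \<in> ?J" using assms by auto
    then show ?thesis by blast
  next
    case False then have "1 \<in> ?J" using assms by auto
    then show ?thesis by blast
  qed
  have S: "{v $ i | i. i < dim_vec v} = (\<lambda>i. v $ i) ` {..<k}" using assms by auto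
  have ymem: "v $ (y - 1) \<in> (\<lambda>i. v $ i) ` {..<k}" using assms by auto
  have vmin: "vmin v \<le> v $ (y - 1)" unfolding vmin_def S using ymem by auto
  have vmx: "v $ (y - 1) \<le> vmax v" unfolding vmax_def S using ymem by auto
  have "Max ((\<lambda>j. v $ (j - 1)) ` ?J) \<in> (\<lambda>j. v $ (j - 1)) ` ?J" using ne by (intro Max_in) auto
  then obtain j0 where j0: "j0 \<in> ?J" "Max ((\<lambda>j. v $ (j - 1)) ` ?J) = v $ (j0 - 1)" by auto
  have "v $ (j0 - 1) \<le> vmax v" unfolding vmax_def S using j0 by (intro Max_ge) auto
  then show "margin v y + vmax v - vmin v \<ge> 0" unfolding margin_alt using j0 vmin assms by simp
  show "margin v y + vmax v - vmin v \<ge> margin v y" using vmin vmx by simp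
qed

lemma ramp_lip: assumes g: "\<gamma> > 0" shows "ramp \<gamma> a - ramp \<gamma> b \<le> \<bar>a - b\<bar> / \<gamma>"
proof -
  have d: "\<bar>a - b\<bar> / \<gamma> \<ge> a / \<gamma> - b / \<gamma>" "\<bar>a - b\<bar> / \<gamma> \<ge> 0"
    using g by (simp_all add: diff_divide_distrib[symmetric] divide_right_mono)
  have "x < - \<gamma> \<Longrightarrow> x / \<gamma> < -1" for x using g by (simp add: field_simps)
  moreover have "\<not> x < - \<gamma> \<Longrightarrow> x / \<gamma> \<ge> -1" for x using g by (simp add: field_simps)
  moreover have "x \<le> 0 \<Longrightarrow> x / \<gamma> \<le> 0" for x using g by (simp add: divide_nonpos_pos)
  moreover have "\<not> x \<le> 0 \<Longrightarrow> x / \<gamma> > 0" for x using g by simp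
  ultimately show ?thesis unfolding ramp_def using d
    by (smt (verit))
qed
lemma ramp_bounds: "\<gamma> > 0 \<Longrightarrow> 0 \<le> ramp \<gamma> a \<and> ramp \<gamma> a \<le> 1"
  unfolding ramp_def by (simp add: field_simps)
lemma ramp_gap: "\<gamma> > 0 \<Longrightarrow> 1 - ramp \<gamma> (- m) \<le> max 0 (m / \<gamma>)"
  unfolding ramp_def by (simp add: field_simps)


theorem lemmaC2:
  fixes d k L n :: nat and B \<gamma> :: real
    and dims :: "nat \<Rightarrow> nat"
    and \<sigma> :: "nat \<Rightarrow> real \<Rightarrow> real" and \<rho> s b :: "nat \<Rightarrow> real"
    and A :: "nat \<Rightarrow> real mat"
    and xs :: "nat \<Rightarrow> real vec" and ys :: "nat \<Rightarrow> nat"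
  assumes k2: "k \<ge> 2" and L1: "L \<ge> 1" and gpos: "\<gamma> > 0"
    and d0: "dims 0 = d" and dL: "dims L = k"
    and Adim: "\<forall>i\<in>{1..L}. A i \<in> carrier_mat (dims i) (dims (i - 1))"
    and lip: "\<forall>i\<in>{1..L}. \<forall>u v. \<bar>\<sigma> i u - \<sigma> i v\<bar> \<le> \<rho> i * \<bar>u - v\<bar>"
    and sig0: "\<forall>i\<in>{1..L}. \<sigma> i 0 = 0"
    and specb: "\<forall>i\<in>{1..L}. spec_norm (A i) \<le> s i"
    and frobb: "\<forall>i\<in>{1..L}. frob_norm (A i) \<le> b i"
    and n1: "n \<ge> 1"
    and pts: "\<forall>j<n. (xs j, ys j) \<in> Zset d k B"
  shows "lambda_plus (Zset d k B) dZ
           (\<lambda>(x, y). ramp \<gamma> (- margin (net \<sigma> A L x) y))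
           (\<lambda>j. (xs j, ys j)) n
         \<le> Max ((\<lambda>j. max ((2 / \<gamma>) * (\<Prod>i=1..L. \<rho> i * spec_norm (A i)))
                        ((margin (net \<sigma> A L (xs j)) (ys j)
                          + vmax (net \<sigma> A L (xs j)) - vmin (net \<sigma> A L (xs j))) / \<gamma>))
                ` {..<n})"
proof -
  let ?f = "\<lambda>(x, y). ramp \<gamma> (- margin (net \<sigma> A L x) y)"
  let ?zs = "\<lambda>j. (xs j, ys j)"
  let ?Z = "Zset d k B"
  let ?K = "\<Prod>i=1..L. \<rho> i * spec_norm (A i)"
  let ?sec = "\<lambda>j. (margin (net \<sigma> A L (xs j)) (ys j)
                          + vmax (net \<sigma> A L (xs j)) - vmin (net \<sigma> A L (xs j))) / \<gamma>"
  let ?g = "\<lambda>j. max ((2 / \<gamma>) * ?K) (?sec j)"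
  define C where "C = Max (?g ` {..<n})"
  have Cge: "?g j \<le> C" if "j < n" for j
    unfolding C_def using that by (intro Max_ge) auto
  have C1: "(2 / \<gamma>) * ?K \<le> C" using Cge[of 0] n1 by auto
  have C2: "?sec j \<le> C" if "j < n" for j using Cge[OF that] by auto
  have Zmem: "x \<in> carrier_vec d \<and> vnorm x \<le> B \<and> y \<in> {1..k}" if "(x, y) \<in> ?Z" for x y
    using that by (simp add: Zset_def)
  have dimnet: "dim_vec (net \<sigma> A L x) = k" if "x \<in> carrier_vec d" for x
    using net_dim[OF Adim d0 that, of L \<sigma>] dL by simp
  have fb: "0 \<le> ?f z \<and> ?f z \<le> 1" for z
    using ramp_bounds[OF gpos] by (cases z) simp
  have pt: "xs j \<in> carrier_vec d \<and> vnorm (xs j) \<le> B \<and> ys j \<in> {1..k}" if "j < n" for j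
    using pts that Zmem by blast
  have key: "?f z' - ?f (?zs j) \<le> C * dZ (?zs j) z'" if j: "j < n" and z': "z' \<in> ?Z" for j z'
  proof -
    obtain x' y' where z'eq: "z' = (x', y')" by (cases z')
    have x': "x' \<in> carrier_vec d" "vnorm x' \<le> B" "y' \<in> {1..k}" using Zmem z' z'eq by auto
    have xj: "xs j \<in> carrier_vec d" "vnorm (xs j) \<le> B" "ys j \<in> {1..k}" using pt[OF j] by auto
    let ?v = "net \<sigma> A L (xs j)" and ?v' = "net \<sigma> A L x'"
    have dv: "dim_vec ?v = k" "dim_vec ?v' = k" using dimnet xj x' by auto
    have nl: "vnorm (?v' - ?v) \<le> ?K * vnorm (x' - xs j)"
      using net_lip[OF Adim d0 x'(1) xj(1) lip, of L] by simp
    have vc: "vnorm (x' - xs j) = vnorm (xs j - x')"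
      using x'(1) xj(1) by (intro vnorm_minus_comm) auto
    have m: "\<bar>margin ?v' y' - margin ?v y'\<bar> \<le> 2 * vnorm (?v' - ?v)"
      by (rule margin_lip[OF dv(1) dv(2) k2 x'(3)])
    have "?f z' - ?f (xs j, y') = ramp \<gamma> (- margin ?v' y') - ramp \<gamma> (- margin ?v y')"
      using z'eq by simp
    also have "\<dots> \<le> \<bar>(- margin ?v' y') - (- margin ?v y')\<bar> / \<gamma>" by (rule ramp_lip[OF gpos])
    also have "\<dots> = \<bar>margin ?v' y' - margin ?v y'\<bar> / \<gamma>" by (simp add: abs_minus_commute)
    also have "\<dots> \<le> (2 * (?K * vnorm (x' - xs j))) / \<gamma>"
      using m nl gpos by (intro divide_right_mono) auto
    also have "\<dots> = ((2 / \<gamma>) * ?K) * vnorm (xs j - x')" using vc by simp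
    also have "\<dots> \<le> C * vnorm (xs j - x')"
      using C1 vnorm_nonneg by (rule mult_right_mono)
    finally have part1: "?f z' - ?f (xs j, y') \<le> C * vnorm (xs j - x')" .
    show ?thesis
    proof (cases "y' = ys j")
      case True
      then show ?thesis using part1 z'eq by (simp add: dZ_def)
    next
      case False
      have r: "margin ?v (ys j) + vmax ?v - vmin ?v \<ge> 0" "margin ?v (ys j) + vmax ?v - vmin ?v \<ge> margin ?v (ys j)"
        using margin_range[OF dv(1) k2 xj(3)] by auto
      have "?f (xs j, y') - ?f (?zs j) \<le> 1 - ramp \<gamma> (- margin ?v (ys j))"
        using fb[of "(xs j, y')"] by simp
      also have "\<dots> \<le> max 0 (margin ?v (ys j) / \<gamma>)" by (rule ramp_gap[OF gpos])
      also have "\<dots> \<le> ?sec j"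
        using r gpos by (auto intro: divide_right_mono)
      also have "\<dots> \<le> C" by (rule C2[OF j])
      finally have "?f (xs j, y') - ?f (?zs j) \<le> C" .
      then show ?thesis using part1 z'eq False by (simp add: dZ_def algebra_simps)
    qed
  qed
  have Sup0: "Sup {?f z' - C * dZ (?zs j) z' - ?f (?zs j) | z'. z' \<in> ?Z} = 0" if j: "j < n" for j
  proof (rule cSup_eq_maximum)
    have "?zs j \<in> ?Z" using pts j by blast
    moreover have "dZ (?zs j) (?zs j) = 0" by (simp add: dZ_def vnorm_sub_self)
    ultimately show "0 \<in> {?f z' - C * dZ (?zs j) z' - ?f (?zs j) | z'. z' \<in> ?Z}"
      by (intro CollectI exI[of _ "?zs j"]) simp
  next
    fix x assume "x \<in> {?f z' - C * dZ (?zs j) z' - ?f (?zs j) | z'. z' \<in> ?Z}"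
    then obtain z' where "z' \<in> ?Z" "x = ?f z' - C * dZ (?zs j) z' - ?f (?zs j)" by blast
    then show "x \<le> 0" using key[OF j, of z'] by simp
  qed
  have Cin: "psi ?Z dZ ?f ?zs n C = 0"
    unfolding psi_def using Sup0 by simp
  have lb: "lam \<ge> -1" if "psi ?Z dZ ?f ?zs n lam = 0" for lam
  proof (rule ccontr)
    assume "\<not> lam \<ge> -1"
    then have lam: "lam < -1" by simp
    let ?S = "\<lambda>j. {?f z' - lam * dZ (?zs j) z' - ?f (?zs j) | z'. z' \<in> ?Z}"
    have bdd: "bdd_above (?S j)" if j: "j < n" for j
    proof (rule bdd_aboveI[where M = "1 + (- lam) * (2 * B + 1)"])
      fix x assume "x \<in> ?S j"
      then obtain z' where z': "z' \<in> ?Z" and x: "x = ?f z' - lam * dZ (?zs j) z' - ?f (?zs j)" by blast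
      obtain x' y' where z'eq: "z' = (x', y')" by (cases z')
      have x': "x' \<in> carrier_vec d" "vnorm x' \<le> B" using Zmem z' z'eq by auto
      have xj: "xs j \<in> carrier_vec d" "vnorm (xs j) \<le> B" using pt[OF j] by auto
      have "vnorm (xs j - x') \<le> vnorm (xs j) + vnorm x'"
        using x' xj by (intro vnorm_diff_le) auto
      then have dzb: "dZ (?zs j) z' \<le> 2 * B + 1" using x' xj z'eq by (simp add: dZ_def)
      have "(- lam) * dZ (?zs j) z' \<le> (- lam) * (2 * B + 1)"
        using dzb lam by (intro mult_left_mono) auto
      then show "x \<le> 1 + (- lam) * (2 * B + 1)" using x fb[of z'] fb[of "?zs j"] by simp
    qed
    have ge0: "Sup (?S j) \<ge> 0" if j: "j < n" for j
    proof -
      have "?zs j \<in> ?Z" using pts j by blast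
      moreover have "dZ (?zs j) (?zs j) = 0" by (simp add: dZ_def vnorm_sub_self)
      ultimately have "0 \<in> ?S j" by (intro CollectI exI[of _ "?zs j"]) simp
      then show ?thesis using bdd[OF j] by (rule cSup_upper)
    qed
    have gt0: "Sup (?S 0) > 0"
    proof -
      define y' where "y' = (if ys 0 = 1 then 2 else (1::nat))"
      have y': "y' \<in> {1..k}" "y' \<noteq> ys 0" using k2 by (auto simp: y'_def)
      have "(xs 0, y') \<in> ?Z" using pt[of 0] n1 y' by (simp add: Zset_def)
      moreover have "dZ (?zs 0) (xs 0, y') = 1" using y' by (simp add: dZ_def vnorm_sub_self)
      ultimately have "?f (xs 0, y') - lam * 1 - ?f (?zs 0) \<in> ?S 0"
        by (intro CollectI exI[of _ "(xs 0, y')"]) simp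
      then have "?f (xs 0, y') - lam * 1 - ?f (?zs 0) \<le> Sup (?S 0)"
        using bdd[of 0] n1 by (intro cSup_upper) auto
      moreover have "?f (xs 0, y') - lam * 1 - ?f (?zs 0) > 0"
        using fb[of "(xs 0, y')"] fb[of "?zs 0"] lam by simp
      ultimately show ?thesis by linarith
    qed
    have "Sup (?S 0) \<le> (\<Sum>j<n. Sup (?S j))"
      using n1 ge0 by (intro member_le_sum) auto
    then have "(\<Sum>j<n. Sup (?S j)) > 0" using gt0 by linarith
    then have "psi ?Z dZ ?f ?zs n lam > 0" unfolding psi_def using n1 by simp
    with that show False by simp
  qed
  have "lambda_plus ?Z dZ ?f ?zs n \<le> C"
    unfolding lambda_plus_def
  proof (rule cInf_lower)
    show "C \<in> {lam. psi ?Z dZ ?f ?zs n lam = 0}" using Cin by simp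
    show "bdd_below {lam. psi ?Z dZ ?f ?zs n lam = 0}"
      by (rule bdd_belowI[where m = "-1"]) (use lb in auto)
  qed
  then show ?thesis unfolding C_def .
qed

end
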